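(* Let $I$ be a finite index set of users. For each $i \in I$ let $p_i \in [0,1]$ and $\Delta p_i \in \mathbb{R}$ with $p_i - \Delta p_i \in [0,1]$. Let $\alpha > 0$ and $\beta > 0$, and define $$J = \{ i \in I : \alpha p_i > \beta \Delta p_i \}, \qquad K = \{ i \in I : \alpha p_i < \beta \Delta p_i \}.$$ Suppose that $\sum_{j \in J} p_j = \sum_{k \in K} p_k$ and that this common value is positive. Define $$\mathscr{C}_1 = \frac{\sum_{j\in J} \beta \Delta p_j}{\sum_{j\in J} p_j}, \qquad \mathscr{C}_2 = \frac{\sum_{k\in K} \alpha p_k}{\sum_{k \in K} p_k}.$$ Then $\mathscr{C}_1 < \mathscr{C}_2$.
   Context: Interpretation (real-time bidding for online ads): each $i\in I$ indexes an ad request from a distinct user $u_i$; $p_i$ is the action rate if the advertiser's ad is shown, $p_i - \Delta p_i$ the background action rate if it is not shown, and $\Delta p_i$ the AR lift. In pure second-price auctions with no other candidates, $DSP_1$ bids $\alpha p_i$ (value-based bidding) and $DSP_2$ bids $\beta \Delta p_i$ (lift-based bidding); $DSP_1$ wins users in $J$ at cost $\beta\Delta p_j$ each, and $DSP_2$ wins users in $K$ at cost $\alpha p_k$ each. Under last-touch attribution the expected attributed actions are $\sum_J p_j$ and $\sum_K p_k$ (assumed equal). $\mathscr{C}_1,\mathscr{C}_2$ are the costs per attributed action of $DSP_1$ and $DSP_2$; the theorem says lift-based bidding costs the DSP more per attributed action. *)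

theory Defs
  imports Main Complex_Main
begin

end

theory Submission
  imports Defs
begin

theorem theorem2:
  fixes I :: "'u set" and p dp :: "'u \<Rightarrow> real" and \<alpha> \<beta> :: real
  assumes "finite I"
    and "\<And>i. i \<in> I \<Longrightarrow> 0 \<le> p i \<and> p i \<le> 1"
    and "\<And>i. i \<in> I \<Longrightarrow> 0 \<le> p i - dp i \<and> p i - dp i \<le> 1"
    and "\<alpha> > 0" and "\<beta> > 0"
    and "(\<Sum>j\<in>{i\<in>I. \<alpha> * p i > \<beta> * dp i}. p j) = (\<Sum>k\<in>{i\<in>I. \<alpha> * p i < \<beta> * dp i}. p k)"
    and "(\<Sum>j\<in>{i\<in>I. \<alpha> * p i > \<beta> * dp i}. p j) > 0"
  shows "(\<Sum>j\<in>{i\<in>I. \<alpha> * p i > \<beta> * dp i}. \<beta> * dp j) / (\<Sum>j\<in>{i\<in>I. \<alpha> * p i > \<beta> * dp i}. p j)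
       < (\<Sum>k\<in>{i\<in>I. \<alpha> * p i < \<beta> * dp i}. \<alpha> * p k) / (\<Sum>k\<in>{i\<in>I. \<alpha> * p i < \<beta> * dp i}. p k)"
proof -
  let ?J = "{i\<in>I. \<alpha> * p i > \<beta> * dp i}"
  let ?K = "{i\<in>I. \<alpha> * p i < \<beta> * dp i}"
  let ?S = "(\<Sum>j\<in>?J. p j)"
  have fJ: "finite ?J" using assms(1) by simp
  have neJ: "?J \<noteq> {}" using assms(7) by (metis sum.empty less_irrefl)
  have "(\<Sum>j\<in>?J. \<beta> * dp j) < (\<Sum>j\<in>?J. \<alpha> * p j)"
    by (rule sum_strict_mono[OF fJ neJ]) simp
  also have "\<dots> = \<alpha> * ?S" by (simp add: sum_distrib_left)
  finally have lt: "(\<Sum>j\<in>?J. \<beta> * dp j) < \<alpha> * ?S" .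
  have K: "(\<Sum>k\<in>?K. \<alpha> * p k) = \<alpha> * ?S" using assms(6) by (simp add: sum_distrib_left)
  have "(\<Sum>j\<in>?J. \<beta> * dp j) / ?S < \<alpha>" using lt assms(7) by (simp add: divide_less_eq mult.commute)
  also have "\<alpha> = (\<Sum>k\<in>?K. \<alpha> * p k) / (\<Sum>k\<in>?K. p k)" using K assms(6,7) by simp
  finally show ?thesis .
qed

end
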